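(* Let $1\le p<\infty$ and let $T$ be a Dunford–Schwartz operator on $l_\infty$. Then for each $x\in l_p$ there exists $\widehat{x}\in l_p$ such that $$\Big\|\frac1n\sum_{k=0}^{n-1}T^k(x)-\widehat{x}\Big\|_\infty\to 0 \quad (n\to\infty).$$
   Context: $l_\infty$ is the space of bounded real sequences with $\|x\|_\infty=\sup_n|(x)_n|$; $l_p=\{x\in l_\infty:\|x\|_p=(\sum_n|(x)_n|^p)^{1/p}<\infty\}$. A linear operator $T:l_\infty\to l_\infty$ is a Dunford–Schwartz operator if $\|T(x)\|_1\le\|x\|_1$ for all $x\in l_1$ and $\|T(x)\|_\infty\le\|x\|_\infty$ for all $x\in l_\infty$. *)

theory Defs
  imports "HOL-Analysis.Analysis"
begin

definition linfty :: "(nat \<Rightarrow> real) set" where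
  "linfty = {x. \<exists>B. \<forall>n. \<bar>x n\<bar> \<le> B}"

definition norm_inf :: "(nat \<Rightarrow> real) \<Rightarrow> real" where
  "norm_inf x = (SUP n. \<bar>x n\<bar>)"

definition lp :: "real \<Rightarrow> (nat \<Rightarrow> real) set" where
  "lp p = {x \<in> linfty. summable (\<lambda>n. \<bar>x n\<bar> powr p)}"

definition norm_p :: "real \<Rightarrow> (nat \<Rightarrow> real) \<Rightarrow> real" where
  "norm_p p x = (\<Sum>n. \<bar>x n\<bar> powr p) powr (1 / p)"

definition dunford_schwartz :: "((nat \<Rightarrow> real) \<Rightarrow> (nat \<Rightarrow> real)) \<Rightarrow> bool" where
  "dunford_schwartz T \<longleftrightarrow>
     (\<forall>x\<in>linfty. T x \<in> linfty) \<and>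
     (\<forall>x\<in>linfty. \<forall>y\<in>linfty. \<forall>a b::real. T (\<lambda>n. a * x n + b * y n) = (\<lambda>n. a * T x n + b * T y n)) \<and>
     (\<forall>x\<in>lp 1. T x \<in> lp 1 \<and> norm_p 1 (T x) \<le> norm_p 1 x) \<and>
     (\<forall>x\<in>linfty. norm_inf (T x) \<le> norm_inf x)"

end

theory Submission
  imports Defs "HOL-Analysis.Analysis" "HOL-Library.Function_Algebras"
begin


lemma sum_apply': "(\<Sum>k\<in>A. F k) i = (\<Sum>k\<in>A. F k i)"
  by (induct A rule: infinite_finite_induct) auto

lemma linfty_bdd: "x \<in> linfty \<Longrightarrow> bdd_above (range (\<lambda>n. \<bar>x n\<bar>))"
  unfolding linfty_def bdd_above_def by auto

lemma norm_inf_ge: "x \<in> linfty \<Longrightarrow> \<bar>x i\<bar> \<le> norm_inf x"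
  unfolding norm_inf_def by (rule cSUP_upper[OF _ linfty_bdd]) auto

lemma norm_inf_le: "(\<And>i. \<bar>x i\<bar> \<le> c) \<Longrightarrow> norm_inf x \<le> c"
  unfolding norm_inf_def by (rule cSUP_least) auto

lemma norm_inf_nonneg: "x \<in> linfty \<Longrightarrow> 0 \<le> norm_inf x"
  using norm_inf_ge[of x 0] by linarith

lemma linftyI: "(\<And>i. \<bar>x i\<bar> \<le> B) \<Longrightarrow> x \<in> linfty"
  unfolding linfty_def by auto

lemma linfty_lin: "x \<in> linfty \<Longrightarrow> y \<in> linfty \<Longrightarrow> (\<lambda>n. a * x n + b * y n) \<in> linfty"
proof -
  assume "x \<in> linfty" "y \<in> linfty"
  then obtain B C where B: "\<And>n. \<bar>x n\<bar> \<le> B" and C: "\<And>n. \<bar>y n\<bar> \<le> C" unfolding linfty_def by auto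
  show ?thesis
  proof (rule linftyI)
    fix i
    have "\<bar>a * x i + b * y i\<bar> \<le> \<bar>a\<bar> * \<bar>x i\<bar> + \<bar>b\<bar> * \<bar>y i\<bar>"
      by (metis abs_mult abs_triangle_ineq)
    also have "\<dots> \<le> \<bar>a\<bar> * B + \<bar>b\<bar> * C"
      by (intro add_mono mult_left_mono B C) auto
    finally show "\<bar>a * x i + b * y i\<bar> \<le> \<bar>a\<bar> * B + \<bar>b\<bar> * C" .
  qed
qed

lemma lp_linfty: "x \<in> lp p \<Longrightarrow> x \<in> linfty" unfolding lp_def by auto
lemma lp_summable: "x \<in> lp p \<Longrightarrow> summable (\<lambda>n. \<bar>x n\<bar> powr p)" unfolding lp_def by auto

lemma powr_convex0:
  assumes p: "p \<ge> 1" shows "convex_on {0..} (\<lambda>x::real. x powr p)"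
proof (rule convex_onI)
  show "convex {0::real..}" by (simp add: convex_real_interval)
  fix t x y :: real assume t: "t > 0" "t < 1" and xy: "x \<in> {0..}" "y \<in> {0..}"
  have key: "(s * z) powr p \<le> s * z powr p" if "0 < s" "s < 1" "0 \<le> z" for s z :: real
  proof -
    have "(s * z) powr p = s powr p * z powr p" using that by (simp add: powr_mult)
    also have "s powr p \<le> s powr 1" using that p by (intro powr_mono') auto
    hence "s powr p * z powr p \<le> s * z powr p" using that by (auto intro: mult_right_mono)
    finally show ?thesis .
  qed
  show "((1 - t) *\<^sub>R x + t *\<^sub>R y) powr p \<le> (1 - t) * x powr p + t * y powr p"
  proof (cases "x = 0 \<or> y = 0")
    case True
    then show ?thesis
    proof
      assume "x = 0"
      then show ?thesis using key[of t y] t xy p by auto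
    next
      assume "y = 0"
      then show ?thesis using key[of "1-t" x] t xy p by auto
    qed
  next
    case False
    then have "x \<in> {0<..}" "y \<in> {0<..}" using xy by auto
    then show ?thesis using powr_convex[OF p] t unfolding convex_on_def by auto
  qed
qed

lemma jensen_powr:
  fixes w y :: "nat \<Rightarrow> real"
  assumes p: "p \<ge> 1" and fin: "finite A" and w: "\<And>k. k \<in> A \<Longrightarrow> 0 \<le> w k"
    and y: "\<And>k. k \<in> A \<Longrightarrow> 0 \<le> y k" and ws: "(\<Sum>k\<in>A. w k) \<le> 1"
  shows "(\<Sum>k\<in>A. w k * y k) powr p \<le> (\<Sum>k\<in>A. w k * y k powr p)"
proof -
  define S where "S = insert None (Some ` A)"
  define a where "a = (\<lambda>q. case q of None \<Rightarrow> 1 - sum w A | Some k \<Rightarrow> w k)"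
  define z where "z = (\<lambda>q. case q of None \<Rightarrow> 0 | Some k \<Rightarrow> y k)"
  have nn: "None \<notin> Some ` A" by auto
  have sA: "(\<Sum>q\<in>Some ` A. g q) = (\<Sum>k\<in>A. g (Some k))" for g :: "nat option \<Rightarrow> real"
    by (simp add: sum.reindex)
  have "(\<lambda>x. x powr p) (\<Sum>q\<in>S. a q *\<^sub>R z q) \<le> (\<Sum>q\<in>S. a q * (\<lambda>x. x powr p) (z q))"
    by (rule convex_on_sum[OF _ _ powr_convex0[OF p]])
       (use fin w y ws in \<open>auto simp: S_def a_def z_def sum.insert[OF _ nn] sA\<close>)
  moreover have "(\<Sum>q\<in>S. a q *\<^sub>R z q) = (\<Sum>k\<in>A. w k * y k)"
    using fin by (simp add: S_def a_def z_def sum.insert[OF _ nn] sA)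
  moreover have "(\<Sum>q\<in>S. a q * z q powr p) = (\<Sum>k\<in>A. w k * y k powr p)"
    using fin p by (simp add: S_def a_def z_def sum.insert[OF _ nn] sA)
  ultimately show ?thesis by simp
qed


definition emat :: "nat \<Rightarrow> nat \<Rightarrow> real" where "emat j = (\<lambda>m. if m = j then 1 else 0)"
definition trunc :: "nat \<Rightarrow> (nat \<Rightarrow> real) \<Rightarrow> nat \<Rightarrow> real" where
  "trunc N y = (\<lambda>m. if m < N then y m else 0)"

lemma emat_linfty: "emat j \<in> linfty" by (rule linftyI[of _ 1]) (auto simp: emat_def)

lemma trunc_linfty: "trunc N y \<in> linfty"
proof (rule linftyI[of _ "\<Sum>j<N. \<bar>y j\<bar>"])
  fix i show "\<bar>trunc N y i\<bar> \<le> (\<Sum>j<N. \<bar>y j\<bar>)"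
  proof (cases "i < N")
    case True
    then show ?thesis unfolding trunc_def
      using member_le_sum[of i "{..<N}" "\<lambda>j. \<bar>y j\<bar>"] by auto
  qed (auto simp: trunc_def sum_nonneg)
qed

context
  fixes T :: "(nat \<Rightarrow> real) \<Rightarrow> nat \<Rightarrow> real"
  assumes DS: "dunford_schwartz T"
begin

lemma T_linfty: "x \<in> linfty \<Longrightarrow> T x \<in> linfty" using DS unfolding dunford_schwartz_def by auto
lemma T_lin: "x \<in> linfty \<Longrightarrow> y \<in> linfty \<Longrightarrow> T (\<lambda>n. a * x n + b * y n) = (\<lambda>n. a * T x n + b * T y n)"
  using DS unfolding dunford_schwartz_def by auto
lemma T_l1: "x \<in> lp 1 \<Longrightarrow> T x \<in> lp 1 \<and> norm_p 1 (T x) \<le> norm_p 1 x"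
  using DS unfolding dunford_schwartz_def by auto
lemma T_inf: "x \<in> linfty \<Longrightarrow> norm_inf (T x) \<le> norm_inf x"
  using DS unfolding dunford_schwartz_def by auto

lemma T_abs_le: "x \<in> linfty \<Longrightarrow> \<bar>T x i\<bar> \<le> norm_inf x"
  using norm_inf_ge[OF T_linfty] T_inf by (meson order_trans)

lemma T_zero: "T (\<lambda>n. 0) = (\<lambda>n. 0)"
proof -
  have z: "(\<lambda>n::nat. 0::real) \<in> linfty" by (rule linftyI[of _ 0]) auto
  have "T (\<lambda>n. 0 * 0 + 0 * 0) = (\<lambda>n. 0 * T (\<lambda>n. 0) n + 0 * T (\<lambda>n. 0) n)"
    by (rule T_lin[OF z z])
  then show ?thesis by simp
qed

lemma Tk_linfty: "x \<in> linfty \<Longrightarrow> (T^^k) x \<in> linfty"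
  by (induct k) (auto intro: T_linfty)

lemma Tk_lin: "x \<in> linfty \<Longrightarrow> y \<in> linfty \<Longrightarrow>
  (T^^k) (\<lambda>n. a * x n + b * y n) = (\<lambda>n. a * (T^^k) x n + b * (T^^k) y n)"
  by (induct k) (auto simp: T_lin Tk_linfty)

lemma Tk_inf: "x \<in> linfty \<Longrightarrow> norm_inf ((T^^k) x) \<le> norm_inf x"
  by (induct k) (auto intro: order_trans[OF T_inf] Tk_linfty)

lemma Tk_abs_le: "x \<in> linfty \<Longrightarrow> \<bar>(T^^k) x i\<bar> \<le> norm_inf x"
  using norm_inf_ge[OF Tk_linfty] Tk_inf by (meson order_trans)

definition amat :: "nat \<Rightarrow> nat \<Rightarrow> real" where "amat i j = T (emat j) i"

lemma T_trunc: "T (trunc N y) i = (\<Sum>j<N. y j * amat i j)"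
proof (induct N)
  case 0
  have "trunc 0 y = (\<lambda>n. 0)" by (auto simp: trunc_def)
  then show ?case by (simp add: T_zero)
next
  case (Suc N)
  have "trunc (Suc N) y = (\<lambda>n. 1 * trunc N y n + y N * emat N n)"
    by (auto simp: trunc_def emat_def fun_eq_iff less_Suc_eq)
  moreover have "T (\<lambda>n. 1 * trunc N y n + y N * emat N n) = (\<lambda>n. 1 * T (trunc N y) n + y N * T (emat N) n)"
    by (rule T_lin[OF trunc_linfty emat_linfty])
  ultimately have "T (trunc (Suc N) y) i = T (trunc N y) i + y N * amat i N"
    by (simp add: amat_def)
  then show ?case using Suc by simp
qed

lemma row_bound: "(\<Sum>j<N. \<bar>amat i j\<bar>) \<le> 1"
proof -
  define s where "s = (\<lambda>m. sgn (amat i m))"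
  have "(\<Sum>j<N. \<bar>amat i j\<bar>) = T (trunc N s) i"
    by (simp add: T_trunc s_def sgn_mult_abs abs_sgn mult.commute)
  also have "\<dots> \<le> norm_inf (trunc N s)"
    using T_abs_le[OF trunc_linfty] by (meson abs_ge_self order_trans)
  also have "\<dots> \<le> 1"
    by (rule norm_inf_le) (auto simp: trunc_def s_def abs_sgn_eq)
  finally show ?thesis .
qed

lemma amat_le1: "\<bar>amat i j\<bar> \<le> 1"
proof -
  have "0 \<le> (\<Sum>k<j. \<bar>amat i k\<bar>)" by (simp add: sum_nonneg)
  moreover have "(\<Sum>k<Suc j. \<bar>amat i k\<bar>) = (\<Sum>k<j. \<bar>amat i k\<bar>) + \<bar>amat i j\<bar>" by simp
  ultimately show ?thesis using row_bound[of i "Suc j"] by linarith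
qed

lemma col_bound: "summable (\<lambda>i. \<bar>amat i j\<bar>) \<and> (\<Sum>i. \<bar>amat i j\<bar>) \<le> 1"
proof -
  have pw: "\<bar>r\<bar> powr 1 = \<bar>r\<bar>" for r :: real by (cases "r = 0") auto
  have e1: "emat j \<in> lp 1"
    unfolding lp_def using emat_linfty
    by (auto simp: pw emat_def intro!: summable_finite[of "{j}"])
  have s1: "(\<Sum>n. \<bar>emat j n\<bar>) = 1"
  proof -
    have "(\<Sum>n. \<bar>emat j n\<bar>) = (\<Sum>n\<in>{j}. \<bar>emat j n\<bar>)"
      by (rule suminf_finite) (auto simp: emat_def)
    then show ?thesis by (simp add: emat_def)
  qed
  from T_l1[OF e1] have a: "T (emat j) \<in> lp 1" "norm_p 1 (T (emat j)) \<le> norm_p 1 (emat j)" by auto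
  have sm: "summable (\<lambda>i. \<bar>amat i j\<bar>)" using lp_summable[OF a(1)] by (simp add: pw amat_def)
  have "norm_p 1 (T (emat j)) = (\<Sum>i. \<bar>amat i j\<bar>)"
    unfolding norm_p_def amat_def using sm suminf_nonneg[OF sm[unfolded amat_def]]
    by (simp add: pw amat_def)
  moreover have "norm_p 1 (emat j) = 1" unfolding norm_p_def by (simp add: pw s1)
  ultimately show ?thesis using a sm by simp
qed

lemma T_sums:
  assumes x: "x \<in> linfty" and x0: "x \<longlonglongrightarrow> 0"
  shows "(\<lambda>j. x j * amat i j) sums T x i"
  unfolding sums_def
proof (rule LIMSEQ_I)
  fix r :: real assume r: "0 < r"
  from LIMSEQ_D[OF x0 half_gt_zero[OF r]] obtain N0 where N0: "\<And>n. n \<ge> N0 \<Longrightarrow> \<bar>x n\<bar> < r/2" by auto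
  show "\<exists>no. \<forall>n\<ge>no. norm ((\<Sum>j<n. x j * amat i j) - T x i) < r"
  proof (intro exI allI impI)
    fix n assume n: "n \<ge> N0"
    have eq: "(\<lambda>m. 1 * x m + (-1) * trunc n x m) = (\<lambda>m. if m < n then 0 else x m)"
      by (auto simp: trunc_def)
    have "T (\<lambda>m. 1 * x m + (-1) * trunc n x m) = (\<lambda>m. 1 * T x m + (-1) * T (trunc n x) m)"
      by (rule T_lin[OF x trunc_linfty])
    then have "T x i - T (trunc n x) i = T (\<lambda>m. 1 * x m + (-1) * trunc n x m) i"
      by simp
    also have "\<dots> = T (\<lambda>m. if m < n then 0 else x m) i" by (simp only: eq)
    finally have d: "T x i - T (trunc n x) i = T (\<lambda>m. if m < n then 0 else x m) i" .
    have lin: "(\<lambda>m. if m < n then 0 else x m) \<in> linfty"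
      using linfty_lin[OF x trunc_linfty[of n x], of 1 "-1"] eq by simp
    have "\<bar>T (\<lambda>m. if m < n then 0 else x m) i\<bar> \<le> norm_inf (\<lambda>m. if m < n then 0 else x m)"
      by (rule T_abs_le[OF lin])
    also have "\<dots> \<le> r/2"
      by (rule norm_inf_le) (use N0 n r in \<open>auto simp: less_imp_le\<close>)
    finally show "norm ((\<Sum>j<n. x j * amat i j) - T x i) < r"
      using d r by (simp add: T_trunc[symmetric])
  qed
qed

end


lemma abs_powr_powr: "p > 0 \<Longrightarrow> (\<bar>r\<bar> powr p) powr (1/p) = \<bar>r::real\<bar>"
  by (cases "r = 0") (auto simp: powr_powr)

lemma lp_tendsto0:
  assumes p: "p \<ge> 1" and x: "x \<in> lp p" shows "x \<longlonglongrightarrow> 0"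
proof -
  have "(\<lambda>n. \<bar>x n\<bar> powr p) \<longlonglongrightarrow> 0" by (rule summable_LIMSEQ_zero[OF lp_summable[OF x]])
  then have "(\<lambda>n. (\<bar>x n\<bar> powr p) powr (1/p)) \<longlonglongrightarrow> 0 powr (1/p)"
    by (rule tendsto_powr') (use p in auto)
  then have "(\<lambda>n. \<bar>x n\<bar>) \<longlonglongrightarrow> 0" using p by (simp add: abs_powr_powr)
  then show ?thesis by (simp add: tendsto_rabs_zero_iff)
qed

context
  fixes T :: "(nat \<Rightarrow> real) \<Rightarrow> nat \<Rightarrow> real"
  assumes DS: "dunford_schwartz T"
begin

lemma schur:
  assumes p: "p \<ge> 1" and x: "x \<in> lp p"
  shows "T x \<in> lp p \<and> (\<Sum>i. \<bar>T x i\<bar> powr p) \<le> (\<Sum>i. \<bar>x i\<bar> powr p)"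
proof -
  define f where "f = (\<lambda>j. \<bar>x j\<bar> powr p)"
  have sf: "summable f" using lp_summable[OF x] by (simp add: f_def)
  have f0: "0 \<le> f j" for j by (simp add: f_def)
  define B where "B = (\<lambda>i. \<Sum>j. \<bar>amat T i j\<bar> * f j)"
  have sB: "summable (\<lambda>j. \<bar>amat T i j\<bar> * f j)" for i
  proof (rule summable_comparison_test'[OF sf])
    fix j show "norm (\<bar>amat T i j\<bar> * f j) \<le> f j"
      using amat_le1[OF DS, of i j] f0[of j] by (simp add: abs_mult mult_left_le_one_le)
  qed
  have xl: "x \<in> linfty" by (rule lp_linfty[OF x])
  have x0: "x \<longlonglongrightarrow> 0" by (rule lp_tendsto0[OF p x])
  have pw: "\<bar>T x i\<bar> powr p \<le> B i" for i
  proof -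
    define S where "S = (\<lambda>N. \<Sum>j<N. x j * amat T i j)"
    have St: "S \<longlonglongrightarrow> T x i" using T_sums[OF DS xl x0, of i] unfolding S_def sums_def .
    have bnd: "\<bar>S N\<bar> \<le> B i powr (1/p)" for N
    proof -
      define R where "R = (\<Sum>j<N. \<bar>amat T i j\<bar> * \<bar>x j\<bar>)"
      have R0: "0 \<le> R" unfolding R_def by (simp add: sum_nonneg)
      have "\<bar>S N\<bar> \<le> R" unfolding S_def R_def
        by (rule order_trans[OF sum_abs]) (simp add: abs_mult mult.commute)
      have "R powr p \<le> (\<Sum>j<N. \<bar>amat T i j\<bar> * \<bar>x j\<bar> powr p)"
        unfolding R_def by (rule jensen_powr[OF p]) (auto intro: row_bound[OF DS])
      also have "\<dots> \<le> B i" unfolding B_def f_def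
        by (rule sum_le_suminf) (use sB[of i] in \<open>auto simp: f_def\<close>)
      finally have "(R powr p) powr (1/p) \<le> B i powr (1/p)"
        using p R0 by (intro powr_mono2) auto
      then have "R \<le> B i powr (1/p)" using R0 p abs_powr_powr[of p R] by simp
      with \<open>\<bar>S N\<bar> \<le> R\<close> show ?thesis by linarith
    qed
    have "\<bar>T x i\<bar> \<le> B i powr (1/p)"
      by (rule LIMSEQ_le_const2[OF tendsto_rabs[OF St]]) (use bnd in auto)
    then have "\<bar>T x i\<bar> powr p \<le> (B i powr (1/p)) powr p" using p by (intro powr_mono2) auto
    also have "\<dots> = B i" using p suminf_nonneg[OF sB[of i]] f0 by (simp add: powr_powr B_def)
    finally show ?thesis .
  qed
  have Bsum: "(\<Sum>i<K. B i) \<le> suminf f" for K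
  proof -
    have "(\<Sum>i<K. B i) = (\<Sum>j. \<Sum>i<K. \<bar>amat T i j\<bar> * f j)"
      unfolding B_def by (rule suminf_sum[symmetric]) (rule sB)
    also have "\<dots> \<le> suminf f"
    proof (rule suminf_le)
      fix j
      have "(\<Sum>i<K. \<bar>amat T i j\<bar>) \<le> (\<Sum>i. \<bar>amat T i j\<bar>)"
        by (rule sum_le_suminf) (use col_bound[OF DS, of j] in auto)
      also have "\<dots> \<le> 1" using col_bound[OF DS, of j] by auto
      finally have "(\<Sum>i<K. \<bar>amat T i j\<bar>) * f j \<le> 1 * f j" using f0[of j] by (rule mult_right_mono)
      then show "(\<Sum>i<K. \<bar>amat T i j\<bar> * f j) \<le> f j" by (simp add: sum_distrib_right)
    next
      show "summable (\<lambda>j. \<Sum>i<K. \<bar>amat T i j\<bar> * f j)" by (rule summable_sum) (rule sB)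
    qed (rule sf)
    finally show ?thesis .
  qed
  have ps: "(\<Sum>i<K. \<bar>T x i\<bar> powr p) \<le> suminf f" for K
    using sum_mono[of "{..<K}" "\<lambda>i. \<bar>T x i\<bar> powr p" B] pw Bsum[of K] by (meson order_trans)
  have sT: "summable (\<lambda>i. \<bar>T x i\<bar> powr p)" by (rule summableI_nonneg_bounded[OF _ ps]) auto
  have "(\<Sum>i. \<bar>T x i\<bar> powr p) \<le> suminf f" by (rule suminf_le_const[OF sT ps])
  then show ?thesis using sT T_linfty[OF DS xl] by (simp add: lp_def f_def)
qed

lemma Tk_lp:
  assumes p: "p \<ge> 1" and x: "x \<in> lp p"
  shows "(T^^k) x \<in> lp p \<and> (\<Sum>i. \<bar>(T^^k) x i\<bar> powr p) \<le> (\<Sum>i. \<bar>x i\<bar> powr p)"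
proof (induct k)
  case (Suc k)
  then show ?case using schur[OF p, of "(T^^k) x"] by auto
qed (use x in auto)

end


lemma sum_extend_zero:
  fixes g :: "nat \<Rightarrow> 'b::comm_monoid_add"
  assumes "K1 \<le> K" "\<And>k. k \<ge> K1 \<Longrightarrow> g k = 0"
  shows "(\<Sum>k<K. g k) = (\<Sum>k<K1. g k)"
  by (rule sum.mono_neutral_right) (use assms in auto)

locale hcore =
  fixes V :: "'a::real_vector set" and S :: "'a \<Rightarrow> 'a" and nrm :: "'a \<Rightarrow> real"
  assumes V_zero: "0 \<in> V"
    and V_add: "\<And>u v. u \<in> V \<Longrightarrow> v \<in> V \<Longrightarrow> u + v \<in> V"
    and V_scale: "\<And>u c. u \<in> V \<Longrightarrow> c *\<^sub>R u \<in> V"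
    and S_V: "\<And>u. u \<in> V \<Longrightarrow> S u \<in> V"
    and S_add: "\<And>u v. u \<in> V \<Longrightarrow> v \<in> V \<Longrightarrow> S (u + v) = S u + S v"
    and S_scale: "\<And>u c. u \<in> V \<Longrightarrow> S (c *\<^sub>R u) = c *\<^sub>R S u"
    and nrm_tri: "\<And>u v. u \<in> V \<Longrightarrow> v \<in> V \<Longrightarrow> nrm (u + v) \<le> nrm u + nrm v"
    and nrm_scale: "\<And>u c. u \<in> V \<Longrightarrow> nrm (c *\<^sub>R u) = \<bar>c\<bar> * nrm u"
    and nrm_S: "\<And>u. u \<in> V \<Longrightarrow> nrm (S u) \<le> nrm u"
    and para: "\<And>u v. u \<in> V \<Longrightarrow> v \<in> V \<Longrightarrow> nrm (u + v)^2 + nrm (u - v)^2 = 2 * nrm u ^ 2 + 2 * nrm v ^ 2"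
begin

lemma V_diff: "u \<in> V \<Longrightarrow> v \<in> V \<Longrightarrow> u - v \<in> V"
  using V_add[of u "(-1) *\<^sub>R v"] V_scale[of v "-1"] by simp

lemma V_sum: "(\<And>k. k \<in> A \<Longrightarrow> f k \<in> V) \<Longrightarrow> sum f A \<in> V"
  by (induct A rule: infinite_finite_induct) (auto intro: V_add V_zero)

lemma S_diff: "u \<in> V \<Longrightarrow> v \<in> V \<Longrightarrow> S (u - v) = S u - S v"
  using S_add[of u "(-1) *\<^sub>R v"] V_scale[of v "-1"] S_scale[of v "-1"] by simp

lemma S_zero: "S 0 = 0"
  using S_scale[OF V_zero, of 0] by simp

lemma S_sum: "(\<And>k. k \<in> A \<Longrightarrow> f k \<in> V) \<Longrightarrow> S (sum f A) = (\<Sum>k\<in>A. S (f k))"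
  by (induct A rule: infinite_finite_induct) (auto simp: S_zero S_add V_sum)

lemma Sk_zero: "(S^^k) 0 = 0"
  by (induct k) (auto simp: S_zero)

lemma Sk_V: "u \<in> V \<Longrightarrow> (S^^k) u \<in> V"
  by (induct k) (auto intro: S_V)

lemma Sk_add: "u \<in> V \<Longrightarrow> v \<in> V \<Longrightarrow> (S^^k) (u + v) = (S^^k) u + (S^^k) v"
  by (induct k) (auto simp: S_add Sk_V)

lemma Sk_scale: "u \<in> V \<Longrightarrow> (S^^k) (c *\<^sub>R u) = c *\<^sub>R (S^^k) u"
  by (induct k) (auto simp: S_scale Sk_V)

lemma Sk_diff: "u \<in> V \<Longrightarrow> v \<in> V \<Longrightarrow> (S^^k) (u - v) = (S^^k) u - (S^^k) v"
  by (induct k) (auto simp: S_diff Sk_V)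

lemma Sk_sum: "(\<And>k. k \<in> A \<Longrightarrow> f k \<in> V) \<Longrightarrow> (S^^j) (sum f A) = (\<Sum>k\<in>A. (S^^j) (f k))"
  by (induct j) (auto simp: S_sum Sk_V)

lemma nrm_zero: "nrm 0 = 0"
  using nrm_scale[OF V_zero, of 0] by simp

lemma nrm_nonneg: "u \<in> V \<Longrightarrow> 0 \<le> nrm u"
  using nrm_tri[of u "(-1) *\<^sub>R u"] V_scale[of u "-1"] nrm_scale[of u "-1"] nrm_zero by simp

lemma nrm_diff: "u \<in> V \<Longrightarrow> v \<in> V \<Longrightarrow> nrm (u - v) \<le> nrm u + nrm v"
  using nrm_tri[of u "(-1) *\<^sub>R v"] V_scale[of v "-1"] nrm_scale[of v "-1"] by simp

lemma nrm_sum: "(\<And>k. k \<in> A \<Longrightarrow> f k \<in> V) \<Longrightarrow> nrm (sum f A) \<le> (\<Sum>k\<in>A. nrm (f k))"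
proof (induct A rule: infinite_finite_induct)
  case (insert a A)
  then have "nrm (sum f (insert a A)) \<le> nrm (f a) + nrm (sum f A)"
    by (auto intro!: nrm_tri V_sum)
  then show ?case using insert by auto
qed (auto simp: nrm_zero)

lemma nrm_Sk: "u \<in> V \<Longrightarrow> nrm ((S^^k) u) \<le> nrm u"
  by (induct k) (auto intro: order_trans[OF nrm_S] Sk_V)

definition Av :: "nat \<Rightarrow> 'a \<Rightarrow> 'a" where "Av n u = (1 / real n) *\<^sub>R (\<Sum>k<n. (S^^k) u)"

lemma Av_V: "u \<in> V \<Longrightarrow> Av n u \<in> V"
  unfolding Av_def by (intro V_scale V_sum Sk_V)

lemma Av_add: "u \<in> V \<Longrightarrow> v \<in> V \<Longrightarrow> Av n (u + v) = Av n u + Av n v"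
  unfolding Av_def by (simp add: Sk_add sum.distrib scaleR_right_distrib)

lemma Av_scale: "u \<in> V \<Longrightarrow> Av n (c *\<^sub>R u) = c *\<^sub>R Av n u"
  unfolding Av_def by (simp add: Sk_scale scaleR_sum_right[symmetric])

lemma Av_sum: "(\<And>k. k \<in> A \<Longrightarrow> f k \<in> V) \<Longrightarrow> Av n (sum f A) = (\<Sum>k\<in>A. Av n (f k))"
proof (induct A rule: infinite_finite_induct)
  case (infinite A)
  then show ?case by (simp add: Av_def Sk_zero)
next
  case empty
  then show ?case by (simp add: Av_def Sk_zero)
next
  case (insert a A)
  then show ?case by (simp add: Av_add V_sum)
qed

lemma nrm_Av: "u \<in> V \<Longrightarrow> nrm (Av n u) \<le> nrm u"
proof (cases "n = 0")
  case True
  assume u: "u \<in> V"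
  then show ?thesis using True nrm_nonneg[OF u] by (simp add: Av_def nrm_zero)
next
  case False
  assume u: "u \<in> V"
  have "nrm (Av n u) = (1 / real n) * nrm (\<Sum>k<n. (S^^k) u)"
    unfolding Av_def by (simp add: nrm_scale V_sum Sk_V u)
  also have "\<dots> \<le> (1 / real n) * (\<Sum>k<n. nrm ((S^^k) u))"
    by (intro mult_left_mono nrm_sum Sk_V u) auto
  also have "\<dots> \<le> (1 / real n) * (\<Sum>k<n. nrm u)"
    by (intro mult_left_mono sum_mono nrm_Sk u) auto
  also have "\<dots> = nrm u" using False by simp
  finally show ?thesis .
qed

lemma Av_shift: "u \<in> V \<Longrightarrow> Av n (S u) = Av n u + (1 / real n) *\<^sub>R ((S^^n) u - u)"
proof -
  assume u: "u \<in> V"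
  have "(\<Sum>k<n. (S^^k) (S u)) = (\<Sum>k<n. (S^^(Suc k)) u)"
    by (simp add: funpow_Suc_right del: funpow.simps)
  also have "\<dots> = (\<Sum>k<Suc n. (S^^k) u) - u"
    by (simp only: sum.lessThan_Suc_shift) simp
  also have "\<dots> = (\<Sum>k<n. (S^^k) u) + ((S^^n) u - u)" by simp
  finally show ?thesis unfolding Av_def by (simp add: scaleR_right_distrib)
qed

lemma Av_shift_k:
  assumes x: "x \<in> V" and n: "n \<ge> 1"
  shows "nrm (Av n ((S^^k) x) - Av n x) \<le> 2 * real k * nrm x / real n"
proof (induct k)
  case 0
  then show ?case by (simp add: nrm_zero)
next
  case (Suc k)
  have xk: "(S^^k) x \<in> V" by (rule Sk_V[OF x])
  have e: "Av n ((S^^Suc k) x) - Av n x = (Av n ((S^^k) x) - Av n x) + (1 / real n) *\<^sub>R ((S^^n) ((S^^k) x) - (S^^k) x)"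
    using Av_shift[OF xk] by simp
  have "nrm ((1 / real n) *\<^sub>R ((S^^n) ((S^^k) x) - (S^^k) x)) = (1 / real n) * nrm ((S^^n) ((S^^k) x) - (S^^k) x)"
    by (simp add: nrm_scale V_diff Sk_V xk)
  also have "\<dots> \<le> (1 / real n) * (nrm x + nrm x)"
    using nrm_diff[OF Sk_V[OF xk] xk, of n] nrm_Sk[OF xk, of n] nrm_Sk[OF x, of k]
    by (intro mult_left_mono) auto
  finally have t: "nrm ((1 / real n) *\<^sub>R ((S^^n) ((S^^k) x) - (S^^k) x)) \<le> 2 * nrm x / real n" by simp
  have "nrm (Av n ((S^^Suc k) x) - Av n x) \<le> nrm (Av n ((S^^k) x) - Av n x) + nrm ((1 / real n) *\<^sub>R ((S^^n) ((S^^k) x) - (S^^k) x))"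
    unfolding e by (intro nrm_tri V_diff Av_V V_scale Sk_V xk x)
  also have "\<dots> \<le> 2 * real k * nrm x / real n + 2 * nrm x / real n" using Suc t by linarith
  also have "\<dots> = 2 * real (Suc k) * nrm x / real n" using n by (simp add: field_simps)
  finally show ?case .
qed

lemma Av_cauchy:
  assumes x: "x \<in> V" and e: "\<epsilon> > 0"
  shows "\<exists>N. \<forall>n\<ge>N. \<forall>m\<ge>N. nrm (Av n x - Av m x) < \<epsilon>"
proof -
  define C where "C = {y. \<exists>K c. (\<forall>k. 0 \<le> c k) \<and> (\<forall>k\<ge>K. c k = 0) \<and> (\<Sum>k<K. c k) = 1 \<and>
                         y = (\<Sum>k<K. c k *\<^sub>R (S^^k) x)}"
  have xC: "x \<in> C" unfolding C_def
    by (rule CollectI, rule exI[of _ 1], rule exI[of _ "\<lambda>k. if k = 0 then 1 else 0"]) auto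
  have CV: "y \<in> V" if "y \<in> C" for y
    using that unfolding C_def by (auto intro!: V_sum V_scale Sk_V x)
  have AvC: "Av n x \<in> C" if "n \<ge> 1" for n
  proof -
    have "Av n x = (\<Sum>k<n. (\<lambda>k. if k < n then 1 / real n else 0) k *\<^sub>R (S^^k) x)"
      unfolding Av_def by (simp add: scaleR_sum_right)
    moreover have "(\<Sum>k<n. (\<lambda>k. if k < n then 1 / real n else (0::real)) k) = 1" using that by simp
    ultimately show ?thesis unfolding C_def
      by (intro CollectI exI[of _ n] exI[of _ "\<lambda>k. if k < n then 1 / real n else 0"]) auto
  qed
  have midC: "(1/2) *\<^sub>R (u + v) \<in> C" if "u \<in> C" "v \<in> C" for u v
  proof -
    from that obtain K1 c1 K2 c2 where
      c1: "\<forall>k. 0 \<le> c1 k" "\<forall>k\<ge>K1. c1 k = 0" "(\<Sum>k<K1. c1 k) = 1" "u = (\<Sum>k<K1. c1 k *\<^sub>R (S^^k) x)" and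
      c2: "\<forall>k. 0 \<le> c2 k" "\<forall>k\<ge>K2. c2 k = 0" "(\<Sum>k<K2. c2 k) = 1" "v = (\<Sum>k<K2. c2 k *\<^sub>R (S^^k) x)"
      unfolding C_def by blast
    define K where "K = max K1 K2"
    define c where "c = (\<lambda>k. (c1 k + c2 k) / 2)"
    have s1: "(\<Sum>k<K. c1 k) = 1" "(\<Sum>k<K. c1 k *\<^sub>R (S^^k) x) = u"
      using sum_extend_zero[of K1 K c1] sum_extend_zero[of K1 K "\<lambda>k. c1 k *\<^sub>R (S^^k) x"] c1
      by (auto simp: K_def)
    have s2: "(\<Sum>k<K. c2 k) = 1" "(\<Sum>k<K. c2 k *\<^sub>R (S^^k) x) = v"
      using sum_extend_zero[of K2 K c2] sum_extend_zero[of K2 K "\<lambda>k. c2 k *\<^sub>R (S^^k) x"] c2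
      by (auto simp: K_def)
    have "(\<Sum>k<K. c k *\<^sub>R (S^^k) x) = (1/2) *\<^sub>R ((\<Sum>k<K. c1 k *\<^sub>R (S^^k) x) + (\<Sum>k<K. c2 k *\<^sub>R (S^^k) x))"
      unfolding c_def by (simp add: scaleR_sum_right sum.distrib[symmetric] scaleR_add_left scaleR_add_right add_divide_distrib)
    then have "(1/2) *\<^sub>R (u + v) = (\<Sum>k<K. c k *\<^sub>R (S^^k) x)" using s1 s2 by simp
    moreover have "(\<Sum>k<K. c k) = 1" using s1 s2 unfolding c_def by (simp add: sum_divide_distrib[symmetric] sum.distrib)
    moreover have "\<forall>k. 0 \<le> c k" "\<forall>k\<ge>K. c k = 0" using c1 c2 by (auto simp: c_def K_def)
    ultimately show ?thesis unfolding C_def by blast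
  qed
  define d where "d = Inf (nrm ` C)"
  have bdd: "bdd_below (nrm ` C)" by (rule bdd_belowI[of _ 0]) (auto intro: nrm_nonneg CV)
  have dle: "d \<le> nrm w" if "w \<in> C" for w unfolding d_def by (rule cInf_lower) (use that bdd in auto)
  have d0: "0 \<le> d" unfolding d_def by (rule cInf_greatest) (use xC in \<open>auto intro: nrm_nonneg CV\<close>)
  define \<delta> where "\<delta> = min 1 (\<epsilon>^2 / (32 * (d + 1)))"
  have \<delta>0: "\<delta> > 0" using e d0 by (simp add: \<delta>_def)
  have "\<exists>z\<in>nrm ` C. z < d + \<delta>" unfolding d_def
    by (rule cInf_lessD) (use xC \<delta>0 d_def in auto)
  then obtain z where zC: "z \<in> C" and zd: "nrm z < d + \<delta>" by auto
  then obtain K c where c: "\<forall>k. 0 \<le> c k" "(\<Sum>k<K. c k) = 1" "z = (\<Sum>k<K. c k *\<^sub>R (S^^k) x)"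
    unfolding C_def by blast
  define N where "N = nat \<lceil>2 * real K * nrm x / \<delta>\<rceil> + 1"
  have close: "nrm (Av n x) < d + 2 * \<delta>" if n: "n \<ge> N" for n
  proof -
    have n1: "n \<ge> 1" using n by (simp add: N_def)
    have "real n \<ge> 2 * real K * nrm x / \<delta>" using n unfolding N_def by linarith
    then have nb: "2 * real K * nrm x / real n \<le> \<delta>" using \<delta>0 n1 by (simp add: field_simps)
    have eqz: "Av n z - Av n x = (\<Sum>k<K. c k *\<^sub>R (Av n ((S^^k) x) - Av n x))"
    proof -
      have "Av n z = (\<Sum>k<K. c k *\<^sub>R Av n ((S^^k) x))"
        unfolding c(3) by (simp add: Av_sum V_scale Sk_V x Av_scale)
      moreover have "(\<Sum>k<K. c k *\<^sub>R Av n x) = Av n x" using c(2) by (simp add: scaleR_sum_left[symmetric])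
      moreover have "(\<Sum>k<K. c k *\<^sub>R (Av n ((S^^k) x) - Av n x)) = (\<Sum>k<K. c k *\<^sub>R Av n ((S^^k) x)) - (\<Sum>k<K. c k *\<^sub>R Av n x)"
        by (simp only: scaleR_diff_right sum_subtractf)
      ultimately show ?thesis by simp
    qed
    have "nrm (Av n z - Av n x) \<le> (\<Sum>k<K. nrm (c k *\<^sub>R (Av n ((S^^k) x) - Av n x)))"
      unfolding eqz by (intro nrm_sum V_scale V_diff Av_V Sk_V x)
    also have "\<dots> \<le> (\<Sum>k<K. c k * (2 * real K * nrm x / real n))"
    proof (rule sum_mono)
      fix k assume k: "k \<in> {..<K}"
      have "nrm (c k *\<^sub>R (Av n ((S^^k) x) - Av n x)) = c k * nrm (Av n ((S^^k) x) - Av n x)"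
        using c(1) by (simp add: nrm_scale V_diff Av_V Sk_V x)
      also have "\<dots> \<le> c k * (2 * real k * nrm x / real n)"
        using Av_shift_k[OF x n1, of k] c(1) by (intro mult_left_mono) auto
      also have "\<dots> \<le> c k * (2 * real K * nrm x / real n)"
        using k c(1) nrm_nonneg[OF x] by (intro mult_left_mono divide_right_mono mult_right_mono) auto
      finally show "nrm (c k *\<^sub>R (Av n ((S^^k) x) - Av n x)) \<le> c k * (2 * real K * nrm x / real n)" .
    qed
    also have "\<dots> = 2 * real K * nrm x / real n" using c(2) by (simp only: sum_distrib_right[symmetric])
    finally have d1: "nrm (Av n z - Av n x) \<le> \<delta>" using nb by linarith
    have "nrm (Av n x) = nrm (Av n z + (-1) *\<^sub>R (Av n z - Av n x))" by simp
    also have "\<dots> \<le> nrm (Av n z) + nrm ((-1) *\<^sub>R (Av n z - Av n x))"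
      by (intro nrm_tri V_scale V_diff Av_V CV zC x)
    also have "\<dots> = nrm (Av n z) + nrm (Av n z - Av n x)"
      by (simp only: nrm_scale[OF V_diff[OF Av_V[OF CV[OF zC]] Av_V[OF x]]])
    also have "\<dots> \<le> nrm z + \<delta>" using nrm_Av[OF CV[OF zC], of n] d1 by linarith
    finally show ?thesis using zd by linarith
  qed
  show ?thesis
  proof (intro exI allI impI)
    fix n m assume n: "n \<ge> N" and m: "m \<ge> N"
    have n1: "n \<ge> 1" "m \<ge> 1" using n m by (auto simp: N_def)
    define u where "u = Av n x"
    define v where "v = Av m x"
    have uv: "u \<in> C" "v \<in> C" using AvC n1 by (auto simp: u_def v_def)
    have uV: "u \<in> V" "v \<in> V" using uv CV by auto
    have "d \<le> nrm ((1/2) *\<^sub>R (u + v))" by (rule dle[OF midC[OF uv]])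
    then have s: "2 * d \<le> nrm (u + v)" by (simp add: nrm_scale V_add uV)
    have sq1: "(2 * d)^2 \<le> nrm (u + v)^2" using s d0 by (intro power_mono) auto
    have sq2: "nrm u ^ 2 \<le> (d + 2 * \<delta>)^2" using close[OF n] nrm_nonneg[OF uV(1)] unfolding u_def
      by (intro power_mono) auto
    have sq3: "nrm v ^ 2 \<le> (d + 2 * \<delta>)^2" using close[OF m] nrm_nonneg[OF uV(2)] unfolding v_def
      by (intro power_mono) auto
    have "nrm (u - v)^2 \<le> 4 * (d + 2 * \<delta>)^2 - (2 * d)^2" using para[OF uV] sq1 sq2 sq3 by linarith
    also have "\<dots> = 16 * \<delta> * d + 16 * \<delta> * \<delta>" by (simp add: power2_eq_square algebra_simps)
    also have "\<dots> \<le> 16 * \<delta> * (d + 1)"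
    proof -
      have "\<delta> \<le> 1" by (simp add: \<delta>_def)
      then have "\<delta> * \<delta> \<le> \<delta> * 1" using \<delta>0 by (intro mult_left_mono) auto
      moreover have "16 * \<delta> * (d + 1) = 16 * \<delta> * d + 16 * \<delta>" by (simp add: distrib_left)
      ultimately show ?thesis by linarith
    qed
    also have "\<dots> \<le> 16 * (\<epsilon>^2 / (32 * (d + 1))) * (d + 1)"
      using d0 by (intro mult_right_mono mult_left_mono) (auto simp: \<delta>_def)
    also have "\<dots> = \<epsilon>^2 / 2" using d0 by (simp add: field_simps)
    also have "\<dots> < \<epsilon>^2" using e by simp
    finally have "nrm (u - v)^2 < \<epsilon>^2" .
    then have "nrm (u - v) < \<epsilon>" by (rule power2_less_imp_less) (use e in linarith)
    then show "nrm (Av n x - Av m x) < \<epsilon>" by (simp only: u_def v_def)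
  qed
qed

end


instantiation "fun" :: (type, real_vector) real_vector
begin
definition scaleR_fun :: "real \<Rightarrow> ('a \<Rightarrow> 'b) \<Rightarrow> 'a \<Rightarrow> 'b" where
  "scaleR_fun c f = (\<lambda>x. c *\<^sub>R f x)"
instance by standard (auto simp: scaleR_fun_def fun_eq_iff algebra_simps)
end

lemma abs_powr2: "\<bar>r\<bar> powr 2 = (r::real)^2"
proof (cases "r = 0")
  case False
  then have "\<bar>r\<bar> powr 2 = \<bar>r\<bar>^2" using powr_numeral[of "\<bar>r\<bar>" "num.Bit0 num.One"] by simp
  then show ?thesis by simp
qed simp

lemma lp2_sq: "v \<in> lp 2 \<Longrightarrow> summable (\<lambda>i. (v i)^2)"
  using lp_summable[of v 2] by (simp add: abs_powr2)

lemma lp2I: "v \<in> linfty \<Longrightarrow> summable (\<lambda>i. (v i)^2) \<Longrightarrow> v \<in> lp 2"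
  unfolding lp_def by (simp add: abs_powr2)

lemma lp2_zero: "(0::nat\<Rightarrow>real) \<in> lp 2"
  by (rule lp2I) (auto intro: linftyI[of _ 0])

lemma lp2_add: assumes u: "u \<in> lp 2" and v: "v \<in> lp 2" shows "u + v \<in> lp 2"
proof (rule lp2I)
  show "u + v \<in> linfty"
    using linfty_lin[OF lp_linfty[OF u] lp_linfty[OF v], of 1 1] by (simp add: plus_fun_def)
  have "summable (\<lambda>i. 2 * (u i)^2 + 2 * (v i)^2)"
    using lp2_sq[OF u] lp2_sq[OF v] by (intro summable_add summable_mult)
  then show "summable (\<lambda>i. ((u + v) i)^2)"
  proof (rule summable_comparison_test'[where N=0])
    fix n
    have "(u n + v n)^2 \<le> 2 * (u n)^2 + 2 * (v n)^2"
      using sum_squares_ge_zero[of "u n - v n" 0] by (simp add: power2_eq_square algebra_simps)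
    then show "norm (((u + v) n)^2) \<le> 2 * (u n)^2 + 2 * (v n)^2" by simp
  qed
qed

lemma lp2_scale: assumes u: "u \<in> lp 2" shows "c *\<^sub>R u \<in> lp 2"
proof (rule lp2I)
  show "c *\<^sub>R u \<in> linfty"
    using linfty_lin[OF lp_linfty[OF u] lp_linfty[OF u], of c 0] by (simp add: scaleR_fun_def)
  show "summable (\<lambda>i. ((c *\<^sub>R u) i)^2)"
    using summable_mult[OF lp2_sq[OF u], of "c^2"] by (simp add: scaleR_fun_def power_mult_distrib)
qed

definition nrm2 :: "(nat \<Rightarrow> real) \<Rightarrow> real" where "nrm2 v = sqrt (\<Sum>i. (v i)^2)"

lemma nrm2_tri: assumes u: "u \<in> lp 2" and v: "v \<in> lp 2" shows "nrm2 (u + v) \<le> nrm2 u + nrm2 v"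
proof -
  have su: "summable (\<lambda>i. (u i)^2)" and sv: "summable (\<lambda>i. (v i)^2)" using lp2_sq u v by auto
  have suv: "summable (\<lambda>i. ((u + v) i)^2)" using lp2_sq[OF lp2_add[OF u v]] .
  have part: "(\<Sum>i<N. ((u + v) i)^2) \<le> (nrm2 u + nrm2 v)^2" for N
  proof -
    have "sqrt (\<Sum>i<N. ((u + v) i)^2) = L2_set (\<lambda>i. u i + v i) {..<N}" by (simp add: L2_set_def)
    also have "\<dots> \<le> L2_set u {..<N} + L2_set v {..<N}" by (rule L2_set_triangle_ineq)
    also have "L2_set u {..<N} \<le> nrm2 u" unfolding L2_set_def nrm2_def
      by (intro real_sqrt_le_mono sum_le_suminf su) auto
    also have "L2_set v {..<N} \<le> nrm2 v" unfolding L2_set_def nrm2_def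
      by (intro real_sqrt_le_mono sum_le_suminf sv) auto
    finally have "sqrt (\<Sum>i<N. ((u + v) i)^2) \<le> nrm2 u + nrm2 v" by simp
    then have "(sqrt (\<Sum>i<N. ((u + v) i)^2))^2 \<le> (nrm2 u + nrm2 v)^2"
      by (rule power_mono[OF _ real_sqrt_ge_zero]) (simp add: sum_nonneg)
    then show ?thesis by (simp add: sum_nonneg)
  qed
  have "(\<Sum>i. ((u + v) i)^2) \<le> (nrm2 u + nrm2 v)^2" by (rule suminf_le_const[OF suv part])
  then have "sqrt (\<Sum>i. ((u + v) i)^2) \<le> sqrt ((nrm2 u + nrm2 v)^2)" by (rule real_sqrt_le_mono)
  also have "\<dots> = nrm2 u + nrm2 v" using suminf_nonneg[OF su] suminf_nonneg[OF sv] by (simp add: nrm2_def)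
  finally show ?thesis unfolding nrm2_def .
qed

lemma nrm2_scale: assumes u: "u \<in> lp 2" shows "nrm2 (c *\<^sub>R u) = \<bar>c\<bar> * nrm2 u"
proof -
  have "(\<Sum>i. ((c *\<^sub>R u) i)^2) = c^2 * (\<Sum>i. (u i)^2)"
    using suminf_mult[OF lp2_sq[OF u], of "c^2"] by (simp add: scaleR_fun_def power_mult_distrib)
  then show ?thesis by (simp add: nrm2_def real_sqrt_mult)
qed

lemma nrm2_para: assumes u: "u \<in> lp 2" and v: "v \<in> lp 2"
  shows "nrm2 (u + v)^2 + nrm2 (u - v)^2 = 2 * nrm2 u ^ 2 + 2 * nrm2 v ^ 2"
proof -
  have uv: "u - v \<in> lp 2" using lp2_add[OF u lp2_scale[OF v, of "-1"]] by simp
  have su: "summable (\<lambda>i. (u i)^2)" and sv: "summable (\<lambda>i. (v i)^2)" using lp2_sq u v by auto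
  have s1: "summable (\<lambda>i. ((u + v) i)^2)" using lp2_sq[OF lp2_add[OF u v]] .
  have s2: "summable (\<lambda>i. ((u - v) i)^2)" using lp2_sq[OF uv] .
  have sq: "nrm2 w ^ 2 = (\<Sum>i. (w i)^2)" if "summable (\<lambda>i. (w i)^2)" for w
    unfolding nrm2_def using suminf_nonneg[OF that] by simp
  have "(\<Sum>i. ((u + v) i)^2) + (\<Sum>i. ((u - v) i)^2) = (\<Sum>i. ((u + v) i)^2 + ((u - v) i)^2)"
    by (rule suminf_add[OF s1 s2])
  also have "\<dots> = (\<Sum>i. 2 * (u i)^2 + 2 * (v i)^2)"
    by (simp add: power2_eq_square algebra_simps)
  also have "\<dots> = 2 * (\<Sum>i. (u i)^2) + 2 * (\<Sum>i. (v i)^2)"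
    using suminf_add[OF summable_mult[OF su, of 2] summable_mult[OF sv, of 2]]
      suminf_mult[OF su, of 2] suminf_mult[OF sv, of 2] by simp
  finally have X: "(\<Sum>i. ((u + v) i)^2) + (\<Sum>i. ((u - v) i)^2) = 2 * (\<Sum>i. (u i)^2) + 2 * (\<Sum>i. (v i)^2)" .
  show ?thesis using X sq[OF s1] sq[OF s2] sq[OF su] sq[OF sv] by linarith
qed

lemma nrm2_ge: assumes v: "v \<in> lp 2" shows "\<bar>v i\<bar> \<le> nrm2 v"
proof -
  have "(v i)^2 \<le> (\<Sum>i. (v i)^2)"
    using sum_le_suminf[OF lp2_sq[OF v], of "{i}"] by auto
  then have "sqrt ((v i)^2) \<le> nrm2 v" unfolding nrm2_def by (rule real_sqrt_le_mono)
  then show ?thesis by simp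
qed


definition avg :: "((nat\<Rightarrow>real)\<Rightarrow>nat\<Rightarrow>real) \<Rightarrow> nat \<Rightarrow> (nat\<Rightarrow>real) \<Rightarrow> nat \<Rightarrow> real" where
  "avg T n y i = (1 / real n) * (\<Sum>k<n. (T^^k) y i)"

context
  fixes T :: "(nat \<Rightarrow> real) \<Rightarrow> nat \<Rightarrow> real"
  assumes DS: "dunford_schwartz T"
begin

lemma hcore_T: "hcore (lp 2) T nrm2"
proof
  show "(0::nat\<Rightarrow>real) \<in> lp 2" by (rule lp2_zero)
  show "u + v \<in> lp 2" if "u \<in> lp 2" "v \<in> lp 2" for u v using lp2_add that .
  show "c *\<^sub>R u \<in> lp 2" if "u \<in> lp 2" for u c using lp2_scale that .
  show "T u \<in> lp 2" if "u \<in> lp 2" for u using schur[OF DS _ that] by simp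
  show "T (u + v) = T u + T v" if "u \<in> lp 2" "v \<in> lp 2" for u v
    using T_lin[OF DS lp_linfty[OF that(1)] lp_linfty[OF that(2)], of 1 1]
    by (simp add: plus_fun_def)
  show "T (c *\<^sub>R u) = c *\<^sub>R T u" if "u \<in> lp 2" for u c
    using T_lin[OF DS lp_linfty[OF that] lp_linfty[OF that], of c 0]
    by (simp add: scaleR_fun_def)
  show "nrm2 (u + v) \<le> nrm2 u + nrm2 v" if "u \<in> lp 2" "v \<in> lp 2" for u v using nrm2_tri that .
  show "nrm2 (c *\<^sub>R u) = \<bar>c\<bar> * nrm2 u" if "u \<in> lp 2" for u c using nrm2_scale that .
  show "nrm2 (T u) \<le> nrm2 u" if "u \<in> lp 2" for u
    using schur[OF DS _ that] unfolding nrm2_def by (simp add: abs_powr2)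
  show "nrm2 (u + v)^2 + nrm2 (u - v)^2 = 2 * nrm2 u ^ 2 + 2 * nrm2 v ^ 2"
    if "u \<in> lp 2" "v \<in> lp 2" for u v using nrm2_para that .
qed

interpretation H: hcore "lp 2" T nrm2 by (rule hcore_T)

lemma Av_eq: "H.Av n y i = avg T n y i"
  unfolding H.Av_def avg_def by (simp add: scaleR_fun_def sum_apply')

lemma l2_cauchy:
  assumes y: "y \<in> lp 2" and e: "\<epsilon> > 0"
  shows "\<exists>N. \<forall>n\<ge>N. \<forall>m\<ge>N. \<forall>i. \<bar>avg T n y i - avg T m y i\<bar> < \<epsilon>"
proof -
  obtain N where N: "\<forall>n\<ge>N. \<forall>m\<ge>N. nrm2 (H.Av n y - H.Av m y) < \<epsilon>"
    using H.Av_cauchy[OF y e] by blast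
  show ?thesis
  proof (intro exI allI impI)
    fix n m i assume n: "n \<ge> N" and m: "m \<ge> N"
    have "\<bar>(H.Av n y - H.Av m y) i\<bar> \<le> nrm2 (H.Av n y - H.Av m y)"
      by (intro nrm2_ge H.V_diff H.Av_V y)
    then have "\<bar>avg T n y i - avg T m y i\<bar> \<le> nrm2 (H.Av n y - H.Av m y)" by (simp add: Av_eq)
    moreover have "nrm2 (H.Av n y - H.Av m y) < \<epsilon>" using N n m by blast
    ultimately show "\<bar>avg T n y i - avg T m y i\<bar> < \<epsilon>" by linarith
  qed
qed

lemma avg_bound: assumes y: "y \<in> linfty" shows "\<bar>avg T n y i\<bar> \<le> norm_inf y"
proof (cases "n = 0")
  case True then show ?thesis using norm_inf_nonneg[OF y] by (simp add: avg_def)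
next
  case False
  have "\<bar>avg T n y i\<bar> = (1 / real n) * \<bar>\<Sum>k<n. (T^^k) y i\<bar>" by (simp add: avg_def abs_mult)
  also have "\<dots> \<le> (1 / real n) * (\<Sum>k<n. \<bar>(T^^k) y i\<bar>)" by (intro mult_left_mono sum_abs) auto
  also have "\<dots> \<le> (1 / real n) * (\<Sum>k<n. norm_inf y)"
    by (intro mult_left_mono sum_mono Tk_abs_le[OF DS y]) auto
  also have "\<dots> = norm_inf y" using False by simp
  finally show ?thesis .
qed

lemma avg_diff: assumes u: "u \<in> linfty" and v: "v \<in> linfty"
  shows "avg T n u i - avg T n v i = avg T n (\<lambda>m. u m - v m) i"
proof -
  have "(T^^k) (\<lambda>m. 1 * u m + (-1) * v m) = (\<lambda>m. 1 * (T^^k) u m + (-1) * (T^^k) v m)" for k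
    by (rule Tk_lin[OF DS u v])
  then have "(T^^k) (\<lambda>m. u m - v m) i = (T^^k) u i - (T^^k) v i" for k
    by (simp add: fun_eq_iff)
  then show ?thesis unfolding avg_def by (simp add: sum_subtractf right_diff_distrib)
qed

lemma avg_p:
  assumes p: "p \<ge> 1" and y: "y \<in> lp p"
  shows "summable (\<lambda>i. \<bar>avg T n y i\<bar> powr p) \<and> (\<Sum>i. \<bar>avg T n y i\<bar> powr p) \<le> (\<Sum>i. \<bar>y i\<bar> powr p)"
proof (cases "n = 0")
  case True
  then show ?thesis using suminf_nonneg[OF lp_summable[OF y]] p by (simp add: avg_def)
next
  case False
  define g where "g = (\<lambda>i. \<Sum>k<n. (1 / real n) * \<bar>(T^^k) y i\<bar> powr p)"
  have sk: "summable (\<lambda>i. \<bar>(T^^k) y i\<bar> powr p)" for k using Tk_lp[OF DS p y, of k] lp_summable by blast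
  have sg: "summable g" unfolding g_def by (intro summable_sum summable_mult sk)
  have pw: "\<bar>avg T n y i\<bar> powr p \<le> g i" for i
  proof -
    define R where "R = (\<Sum>k<n. (1 / real n) * \<bar>(T^^k) y i\<bar>)"
    have "\<bar>avg T n y i\<bar> = (1 / real n) * \<bar>\<Sum>k<n. (T^^k) y i\<bar>" by (simp add: avg_def abs_mult)
    also have "\<dots> \<le> (1 / real n) * (\<Sum>k<n. \<bar>(T^^k) y i\<bar>)" by (intro mult_left_mono sum_abs) auto
    also have "\<dots> = R" by (simp add: R_def sum_distrib_left)
    finally have "\<bar>avg T n y i\<bar> \<le> R" .
    then have "\<bar>avg T n y i\<bar> powr p \<le> R powr p" using p by (intro powr_mono2) auto
    also have "\<dots> \<le> g i" unfolding R_def g_def using False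
      by (intro jensen_powr[OF p]) auto
    finally show ?thesis .
  qed
  have sa: "summable (\<lambda>i. \<bar>avg T n y i\<bar> powr p)"
    by (rule summable_comparison_test'[OF sg, of 0]) (use pw in auto)
  have "(\<Sum>i. \<bar>avg T n y i\<bar> powr p) \<le> suminf g" by (rule suminf_le[OF pw sa sg])
  also have "suminf g = (\<Sum>k<n. (1 / real n) * (\<Sum>i. \<bar>(T^^k) y i\<bar> powr p))"
    unfolding g_def by (subst suminf_sum) (auto intro: summable_mult sk simp: suminf_mult sk suminf_divide)
  also have "\<dots> \<le> (\<Sum>k<n. (1 / real n) * (\<Sum>i. \<bar>y i\<bar> powr p))"
    by (intro sum_mono mult_left_mono) (use Tk_lp[OF DS p y] in auto)
  also have "\<dots> = (\<Sum>i. \<bar>y i\<bar> powr p)" using False by simp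
  finally show ?thesis using sa by simp
qed

end


theorem theorem3p2:
  fixes p :: real and T :: "(nat \<Rightarrow> real) \<Rightarrow> (nat \<Rightarrow> real)" and x :: "nat \<Rightarrow> real"
  assumes "1 \<le> p" and "dunford_schwartz T" and "x \<in> lp p"
  shows "\<exists>xh \<in> lp p.
           (\<lambda>n. norm_inf (\<lambda>i. (1 / real n) * (\<Sum>k<n. (T ^^ k) x i) - xh i)) \<longlonglongrightarrow> 0"
proof -
  note p = assms(1) and DS = assms(2) and x = assms(3)
  have xl: "x \<in> linfty" by (rule lp_linfty[OF x])
  have x0: "x \<longlonglongrightarrow> 0" by (rule lp_tendsto0[OF p x])
  have ucauchy: "\<exists>N. \<forall>n\<ge>N. \<forall>m\<ge>N. \<forall>i. \<bar>avg T n x i - avg T m x i\<bar> < \<epsilon>" if e: "\<epsilon> > 0" for \<epsilon>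
  proof -
    have e3: "\<epsilon> / 3 > 0" using e by simp
    from LIMSEQ_D[OF x0 e3] obtain N0 where N0: "\<And>m. m \<ge> N0 \<Longrightarrow> \<bar>x m\<bar> < \<epsilon> / 3" by auto
    define y where "y = trunc N0 x"
    define w where "w = (\<lambda>m. x m - y m)"
    have yl: "y \<in> linfty" unfolding y_def by (rule trunc_linfty)
    have y2: "y \<in> lp 2"
      by (rule lp2I[OF yl], rule summable_finite[of "{..<N0}"]) (auto simp: y_def trunc_def)
    have wl: "w \<in> linfty" unfolding w_def using linfty_lin[OF xl yl, of 1 "-1"] by simp
    have wn: "norm_inf w \<le> \<epsilon> / 3"
      by (rule norm_inf_le) (use N0 e in \<open>auto simp: w_def y_def trunc_def less_imp_le\<close>)
    obtain N where N: "\<forall>n\<ge>N. \<forall>m\<ge>N. \<forall>i. \<bar>avg T n y i - avg T m y i\<bar> < \<epsilon> / 3"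
      using l2_cauchy[OF DS y2 e3] by blast
    show ?thesis
    proof (intro exI allI impI)
      fix n m i assume n: "n \<ge> N" and m: "m \<ge> N"
      have dn: "avg T n x i - avg T n y i = avg T n w i" unfolding w_def by (rule avg_diff[OF DS xl yl])
      have dm: "avg T m x i - avg T m y i = avg T m w i" unfolding w_def by (rule avg_diff[OF DS xl yl])
      have "\<bar>avg T n w i\<bar> \<le> \<epsilon> / 3" using avg_bound[OF DS wl, of n i] wn by linarith
      moreover have "\<bar>avg T m w i\<bar> \<le> \<epsilon> / 3" using avg_bound[OF DS wl, of m i] wn by linarith
      moreover have "\<bar>avg T n y i - avg T m y i\<bar> < \<epsilon> / 3" using N n m by blast
      ultimately show "\<bar>avg T n x i - avg T m x i\<bar> < \<epsilon>" using dn dm by linarith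
    qed
  qed
  have conv: "convergent (\<lambda>n. avg T n x i)" for i
  proof -
    have "Cauchy (\<lambda>n. avg T n x i)" unfolding Cauchy_def dist_real_def
      using ucauchy by blast
    then show ?thesis by (simp add: Cauchy_convergent_iff)
  qed
  define xh where "xh = (\<lambda>i. lim (\<lambda>n. avg T n x i))"
  have lim: "(\<lambda>n. avg T n x i) \<longlonglongrightarrow> xh i" for i
    unfolding xh_def using conv[of i] by (simp add: convergent_LIMSEQ_iff)
  have unif: "\<exists>N. \<forall>n\<ge>N. \<forall>i. \<bar>avg T n x i - xh i\<bar> \<le> \<epsilon>" if e: "\<epsilon> > 0" for \<epsilon>
  proof -
    obtain N where N: "\<forall>n\<ge>N. \<forall>m\<ge>N. \<forall>i. \<bar>avg T n x i - avg T m x i\<bar> < \<epsilon>"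
      using ucauchy[OF e] by blast
    show ?thesis
    proof (intro exI allI impI)
      fix n i assume n: "n \<ge> N"
      have "(\<lambda>m. \<bar>avg T n x i - avg T m x i\<bar>) \<longlonglongrightarrow> \<bar>avg T n x i - xh i\<bar>"
        by (intro tendsto_intros lim)
      then show "\<bar>avg T n x i - xh i\<bar> \<le> \<epsilon>"
        by (rule LIMSEQ_le_const2) (use N n in \<open>force intro: less_imp_le\<close>)
    qed
  qed
  have xhl: "xh \<in> linfty"
  proof (rule linftyI)
    fix i
    have "(\<lambda>n. \<bar>avg T n x i\<bar>) \<longlonglongrightarrow> \<bar>xh i\<bar>" by (intro tendsto_intros lim)
    then show "\<bar>xh i\<bar> \<le> norm_inf x"
      by (rule LIMSEQ_le_const2) (use avg_bound[OF DS xl] in auto)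
  qed
  have ps: "(\<Sum>i<M. \<bar>xh i\<bar> powr p) \<le> (\<Sum>i. \<bar>x i\<bar> powr p)" for M
  proof -
    have "(\<lambda>n. \<Sum>i<M. \<bar>avg T n x i\<bar> powr p) \<longlonglongrightarrow> (\<Sum>i<M. \<bar>xh i\<bar> powr p)"
      using p by (intro tendsto_sum tendsto_powr' tendsto_rabs lim tendsto_const) auto
    moreover have "(\<Sum>i<M. \<bar>avg T n x i\<bar> powr p) \<le> (\<Sum>i. \<bar>x i\<bar> powr p)" for n
    proof -
      have "(\<Sum>i<M. \<bar>avg T n x i\<bar> powr p) \<le> (\<Sum>i. \<bar>avg T n x i\<bar> powr p)"
        by (rule sum_le_suminf) (use avg_p[OF DS p x, of n] in auto)
      also have "\<dots> \<le> (\<Sum>i. \<bar>x i\<bar> powr p)" using avg_p[OF DS p x, of n] by auto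
      finally show ?thesis .
    qed
    ultimately show ?thesis by (intro LIMSEQ_le_const2) auto
  qed
  have xhp: "xh \<in> lp p"
    unfolding lp_def using xhl summableI_nonneg_bounded[OF _ ps] by auto
  have "(\<lambda>n. norm_inf (\<lambda>i. avg T n x i - xh i)) \<longlonglongrightarrow> 0"
  proof (rule LIMSEQ_I)
    fix r :: real assume r: "r > 0"
    obtain N where N: "\<forall>n\<ge>N. \<forall>i. \<bar>avg T n x i - xh i\<bar> \<le> r / 2"
      using unif[of "r/2"] r by auto
    show "\<exists>no. \<forall>n\<ge>no. norm (norm_inf (\<lambda>i. avg T n x i - xh i) - 0) < r"
    proof (intro exI allI impI)
      fix n assume n: "n \<ge> N"
      have b: "\<bar>avg T n x i - xh i\<bar> \<le> r / 2" for i using N n by blast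
      have "norm_inf (\<lambda>i. avg T n x i - xh i) \<le> r / 2" by (rule norm_inf_le[OF b])
      moreover have "0 \<le> norm_inf (\<lambda>i. avg T n x i - xh i)"
        by (rule norm_inf_nonneg, rule linftyI[OF b])
      ultimately show "norm (norm_inf (\<lambda>i. avg T n x i - xh i) - 0) < r" using r by simp
    qed
  qed
  then show ?thesis using xhp unfolding avg_def by blast
qed


end
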